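(* For every integer $L\geq 0$, \[ \sum_{j=-\infty}^{\infty} (-1)^j \left(\frac{j}{3}\right) {2L+1 \brack L-j}_{q^2} q^{j^2} = q^{1+2L}\,\frac{(q^3;q^6)_L}{(q;q^2)_L}. \]
   Context: For a variable $a$ and integer $n\ge 0$, $(a;q)_n=(1-a)(1-aq)\cdots(1-aq^{n-1})$ (with $(a;q)_0=1$). The $q$-binomial coefficient is ${A \brack B}_q=\frac{(q;q)_A}{(q;q)_B(q;q)_{A-B}}$ if $0\le B\le A$ are integers, and $0$ otherwise; ${A\brack B}_{q^2}$ is the same with $q$ replaced by $q^2$. $\left(\frac{j}{3}\right)$ is the Legendre symbol modulo 3: it equals $1$ if $j\equiv 1 \pmod 3$, $-1$ if $j\equiv -1\pmod 3$, and $0$ if $3\mid j$. *)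

theory Defs
  imports "HOL-Number_Theory.Number_Theory"
begin

definition qpoch :: "'a::comm_ring_1 \<Rightarrow> 'a \<Rightarrow> nat \<Rightarrow> 'a" where
  "qpoch a q n = (\<Prod>k<n. 1 - a * q ^ k)"

definition qbinom :: "'a::field \<Rightarrow> int \<Rightarrow> int \<Rightarrow> 'a" where
  "qbinom q A B = (if 0 \<le> B \<and> B \<le> A
      then qpoch q q (nat A) / (qpoch q q (nat B) * qpoch q q (nat (A - B)))
      else 0)"

end

theory Submission
  imports Defs
begin

datatype 'a eis = Eis (re: 'a) (im: 'a)

lemma eis_eq_iff: "x = y \<longleftrightarrow> re x = re y \<and> im x = im y"
  by (cases x; cases y) auto

instantiation eis :: (comm_ring_1) comm_ring_1
begin
definition "0 = Eis 0 0"
definition "1 = Eis 1 0"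
definition "x + y = Eis (re x + re y) (im x + im y)"
definition "x - y = Eis (re x - re y) (im x - im y)"
definition "- x = Eis (- re x) (- im x)"
definition "x * y = Eis (re x * re y - im x * im y) (re x * im y + im x * re y - im x * im y)"
instance
  by standard (simp_all add: eis_eq_iff zero_eis_def one_eis_def plus_eis_def minus_eis_def
      uminus_eis_def times_eis_def algebra_simps)
end

lemma re_simps[simp]: "re 0 = 0" "re 1 = 1" "re (x + y) = re x + re y" "re (x - y) = re x - re y"
  "re (- x) = - re x" "re (x * y) = re x * re y - im x * im y"
  and im_simps[simp]: "im 0 = 0" "im 1 = 0" "im (x + y) = im x + im y" "im (x - y) = im x - im y"
  "im (- x) = - im x" "im (x * y) = re x * im y + im x * re y - im x * im y"
  by (simp_all add: zero_eis_def one_eis_def plus_eis_def minus_eis_def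
      uminus_eis_def times_eis_def)

lemma im_sum: "im (sum f A) = (\<Sum>x\<in>A. im (f x))"
  by (induction A rule: infinite_finite_induct) auto

definition cE :: "'a::comm_ring_1 \<Rightarrow> 'a eis" where "cE a = Eis a 0"

lemma re_cE[simp]: "re (cE a) = a" and im_cE[simp]: "im (cE a) = 0"
  by (simp_all add: cE_def)

lemma cE_mult: "cE (a * b) = cE a * cE b" by (simp add: eis_eq_iff)
lemma cE_1: "cE 1 = 1" by (simp add: eis_eq_iff)
lemma cE_minus1: "cE (-1) = -1" by (simp add: eis_eq_iff)
lemma cE_pow: "cE (a ^ n) = cE a ^ n"
  by (induction n) (simp_all add: cE_1 cE_mult)
lemma cE_add: "cE (a + b) = cE a + cE b" by (simp add: eis_eq_iff)
lemma cE_diff: "cE (a - b) = cE a - cE b" by (simp add: eis_eq_iff)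
lemma cE_prod: "cE (prod f A) = (\<Prod>x\<in>A. cE (f x))"
  by (induction A rule: infinite_finite_induct) (simp_all add: cE_1 cE_mult)

definition om :: "'a::comm_ring_1 eis" where "om = Eis 0 1"

lemma om2: "om ^ 2 = Eis (-1) (-1)"
  by (simp add: eis_eq_iff om_def power2_eq_square)
lemma om2': "Eis (0::'a::comm_ring_1) 1 ^ 2 = Eis (-1) (-1)"
  using om2 by (simp add: om_def)
lemma om3: "om ^ 3 = 1"
proof -
  have "om ^ 3 = om * om * om" by (simp add: power3_eq_cube)
  thus ?thesis by (simp add: eis_eq_iff om_def)
qed
lemma om_mod: "om ^ m = om ^ (m mod 3)"
proof -
  have "om ^ m = (om ^ 3) ^ (m div 3) * om ^ (m mod 3)"
    by (metis div_mult_mod_eq power_add power_mult mult.commute)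
  thus ?thesis by (simp add: om3)
qed

definition leg :: "nat \<Rightarrow> 'a::comm_ring_1" where "leg m = im (om ^ m)"

lemma leg_eq: "leg m = (if m mod 3 = 1 then 1 else if m mod 3 = 2 then -1 else 0)"
proof -
  have "m mod 3 = 0 \<or> m mod 3 = 1 \<or> m mod 3 = 2" by arith
  moreover have "leg m = im (om ^ (m mod 3))" unfolding leg_def by (subst om_mod) (rule refl)
  ultimately show ?thesis
    by (auto simp: om2' om_def)
qed

lemma QuadRes3: "QuadRes 3 x \<longleftrightarrow> x mod 3 \<noteq> 2"
proof
  assume "QuadRes 3 x"
  then obtain y where y: "[y^2 = x] (mod 3)" by (auto simp: QuadRes_def)
  have "y mod 3 = 0 \<or> y mod 3 = 1 \<or> y mod 3 = 2" by arith
  moreover have "y^2 mod 3 = ((y mod 3)^2) mod 3" by (simp add: power_mod)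
  ultimately have "y^2 mod 3 \<noteq> 2" by auto
  thus "x mod 3 \<noteq> 2" using y by (simp add: cong_def)
next
  assume "x mod 3 \<noteq> 2"
  hence "x mod 3 = 0 \<or> x mod 3 = 1" by arith
  thus "QuadRes 3 x"
  proof
    assume "x mod 3 = 0" thus ?thesis unfolding QuadRes_def
      by (intro exI[of _ 0]) (simp add: cong_def)
  next
    assume "x mod 3 = 1" thus ?thesis unfolding QuadRes_def
      by (intro exI[of _ 1]) (simp add: cong_def)
  qed
qed

lemma Legendre3: "Legendre x 3 = (if x mod 3 = 0 then 0 else if x mod 3 = 1 then 1 else -1)"
  unfolding Legendre_def QuadRes3 by (auto simp: cong_def)

lemma leg_Legendre:
  assumes "k \<le> 2*L+1"
  shows "(of_int (Legendre (int L - int k) 3) :: 'a::comm_ring_1) = leg (2*k+L)"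
proof -
  have "(int L - int k) mod 3 = int ((2*k+L) mod 3)" by presburger
  thus ?thesis unfolding Legendre3 leg_eq by auto
qed

lemma sign_eq: "(-1::'a::comm_ring_1) ^ nat \<bar>int L - int k\<bar> = (-1) ^ (k + L)"
proof (cases "L \<le> k")
  case True
  hence e: "k + L = (k - L) + 2 * L" by simp
  have n: "nat \<bar>int L - int k\<bar> = k - L" "nat (int k - int L) = k - L" using True by simp_all
  have h1: "(-1::'a)^(k+L) = (-1)^(k-L+2*L)" using e by (rule arg_cong)
  have h2: "(-1::'a)^(k-L+2*L) = (-1)^(k-L)" by (simp add: power_add power_mult)
  show ?thesis unfolding n(1) h1 h2 by (rule refl)
next
  case False
  hence e: "k + L = (L - k) + 2 * k" by simp
  have n: "nat \<bar>int L - int k\<bar> = L - k" "nat (int L - int k) = L - k" using False by simp_all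
  have h1: "(-1::'a)^(k+L) = (-1)^(L-k+2*k)" using e by (rule arg_cong)
  have h2: "(-1::'a)^(L-k+2*k) = (-1)^(L-k)" by (simp add: power_add power_mult)
  show ?thesis unfolding n(1) h1 h2 by (rule refl)
qed

fun gb :: "'b::comm_ring_1 \<Rightarrow> nat \<Rightarrow> nat \<Rightarrow> 'b" where
  "gb Q n 0 = 1"
| "gb Q 0 (Suc k) = 0"
| "gb Q (Suc n) (Suc k) = gb Q n (Suc k) + Q^(n-k) * gb Q n k"

lemma gb_zero: "n < k \<Longrightarrow> gb Q n k = 0"
  by (induction Q n k rule: gb.induct) auto

lemma qpoch_0[simp]: "qpoch a Q 0 = 1" by (simp add: qpoch_def)
lemma qpoch_Suc: "qpoch a Q (Suc n) = qpoch a Q n * (1 - a * Q^n)"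
  by (simp add: qpoch_def)

lemma gb_prod: "k \<le> n \<Longrightarrow> gb Q n k * qpoch Q Q k * qpoch Q Q (n-k) = qpoch Q Q n"
proof (induction n arbitrary: k)
  case 0 thus ?case by simp
next
  case (Suc n)
  show ?case
  proof (cases k)
    case 0 thus ?thesis by simp
  next
    case (Suc m)
    hence mn: "m \<le> n" using Suc.prems by simp
    have A: "gb Q n m * qpoch Q Q m * qpoch Q Q (n-m) = qpoch Q Q n" using Suc.IH mn by blast
    show ?thesis
    proof (cases "m = n")
      case True
      hence A': "gb Q n n * qpoch Q Q n = qpoch Q Q n" using A by simp
      have "gb Q (Suc n) k * qpoch Q Q k * qpoch Q Q (Suc n - k) = (gb Q n n * qpoch Q Q n) * (1 - Q * Q^n)"
        using Suc True by (simp add: qpoch_Suc gb_zero mult_ac)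
      thus ?thesis unfolding A' by (simp add: qpoch_Suc)
    next
      case False
      hence mn': "Suc m \<le> n" using mn by simp
      have B: "gb Q n (Suc m) * qpoch Q Q (Suc m) * qpoch Q Q (n - Suc m) = qpoch Q Q n"
        using Suc.IH mn' by blast
      have nm: "n - m = Suc (n - Suc m)" using mn' by simp
      have e1: "qpoch Q Q (n - m) = qpoch Q Q (n - Suc m) * (1 - Q * Q^(n - Suc m))"
        unfolding nm qpoch_Suc ..
      have e2: "Q * Q^(n - Suc m) = Q^(n-m)" unfolding nm by simp
      have e3: "Q^(n-m) * (Q * Q^m) = Q * Q^n"
      proof -
        have "Q^(n-m) * (Q * Q^m) = Q * Q^(n-m+m)" by (simp add: power_add mult_ac)
        thus ?thesis using mn by simp
      qed
      have "gb Q (Suc n) k * qpoch Q Q k * qpoch Q Q (Suc n - k)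
          = gb Q n (Suc m) * qpoch Q Q (Suc m) * qpoch Q Q (n - Suc m) * (1 - Q * Q^(n - Suc m))
            + Q^(n-m) * (gb Q n m * qpoch Q Q m * qpoch Q Q (n-m)) * (1 - Q*Q^m)"
        by (simp add: Suc e1 qpoch_Suc algebra_simps)
      also have "\<dots> = qpoch Q Q n * (1 - Q^(n-m)) + qpoch Q Q n * (Q^(n-m) - Q^(n-m) * (Q*Q^m))"
        unfolding A B e2 by (simp add: algebra_simps)
      also have "\<dots> = qpoch Q Q (Suc n)" unfolding e3 by (simp add: qpoch_Suc algebra_simps)
      finally show ?thesis .
    qed
  qed
qed

lemma qpoch_nz: "m \<le> n \<Longrightarrow> qpoch a Q n \<noteq> (0::'a::field) \<Longrightarrow> qpoch a Q m \<noteq> 0"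
  by (induction n) (auto simp: qpoch_Suc le_Suc_eq)

lemma qbinom_gb:
  fixes Q :: "'a::field"
  assumes "qpoch Q Q n \<noteq> 0" "k \<le> n"
  shows "qbinom Q (int n) (int k) = gb Q n k"
proof -
  have a: "qpoch Q Q k \<noteq> 0" "qpoch Q Q (n-k) \<noteq> 0"
    using qpoch_nz[OF assms(2) assms(1)] qpoch_nz[OF diff_le_self assms(1)] by auto
  have "nat (int n - int k) = n - k" using assms by simp
  hence "qbinom Q (int n) (int k) = qpoch Q Q n / (qpoch Q Q k * qpoch Q Q (n-k))"
    unfolding qbinom_def using assms by simp
  also have "\<dots> = gb Q n k" using gb_prod[OF assms(2), of Q] a by (simp add: field_simps)
  finally show ?thesis .
qed

fun tri :: "nat \<Rightarrow> nat" where "tri 0 = 0" | "tri (Suc k) = tri k + k"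

lemma tri2: "2 * tri k + k = k * k" by (induction k) auto

lemma qbin_thm:
  fixes a b Q :: "'b::comm_ring_1"
  shows "(\<Prod>i<n. a - b * Q^i) = (\<Sum>k\<le>n. gb Q n k * (-1)^k * Q^(tri k) * b^k * a^(n-k))"
proof (induction n)
  case 0 show ?case by simp
next
  case (Suc n)
  define t where "t k = gb Q n k * (-1)^k * Q^(tri k) * b^k * a^(n-k)" for k
  have s1: "(\<Sum>k\<le>Suc n. gb Q (Suc n) k * (-1)^k * Q^(tri k) * b^k * a^(Suc n-k))
       = a^(Suc n) + (\<Sum>m\<le>n. gb Q n (Suc m) * (-1)^(Suc m) * Q^(tri (Suc m)) * b^(Suc m) * a^(n-m))
          + (\<Sum>m\<le>n. Q^(n-m) * gb Q n m * (-1)^(Suc m) * Q^(tri (Suc m)) * b^(Suc m) * a^(n-m))"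
  proof -
    have "(\<Sum>k\<le>Suc n. gb Q (Suc n) k * (-1)^k * Q^(tri k) * b^k * a^(Suc n-k))
       = a^(Suc n) + (\<Sum>m\<le>n. gb Q (Suc n) (Suc m) * (-1)^(Suc m) * Q^(tri (Suc m)) * b^(Suc m) * a^(Suc n - Suc m))"
      unfolding sum.atMost_Suc_shift by simp
    also have "(\<Sum>m\<le>n. gb Q (Suc n) (Suc m) * (-1)^(Suc m) * Q^(tri (Suc m)) * b^(Suc m) * a^(Suc n - Suc m))
       = (\<Sum>m\<le>n. gb Q n (Suc m) * (-1)^(Suc m) * Q^(tri (Suc m)) * b^(Suc m) * a^(n-m) + Q^(n-m) * gb Q n m * (-1)^(Suc m) * Q^(tri (Suc m)) * b^(Suc m) * a^(n-m))"
      by (rule sum.cong[OF refl]) (simp add: algebra_simps del: tri.simps)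
    also have "\<dots> = (\<Sum>m\<le>n. gb Q n (Suc m) * (-1)^(Suc m) * Q^(tri (Suc m)) * b^(Suc m) * a^(n-m)) + (\<Sum>m\<le>n. Q^(n-m) * gb Q n m * (-1)^(Suc m) * Q^(tri (Suc m)) * b^(Suc m) * a^(n-m))"
      by (rule sum.distrib)
    finally show ?thesis by (simp add: add.assoc)
  qed
  have s2: "(\<Sum>m\<le>n. Q^(n-m) * gb Q n m * (-1)^(Suc m) * Q^(tri (Suc m)) * b^(Suc m) * a^(n-m))
      = - (b * Q^n) * (\<Sum>m\<le>n. t m)"
    unfolding sum_distrib_left
  proof (rule sum.cong[OF refl])
    fix m assume "m \<in> {..n}"
    hence mn: "m \<le> n" by simp
    have key: "Q^(n-m) * Q^(tri (Suc m)) = Q^n * Q^(tri m)"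
    proof -
      have "Q^(n-m) * Q^(tri (Suc m)) = Q^(n - m + m + tri m)" by (simp add: power_add mult_ac)
      thus ?thesis using mn by (simp add: power_add)
    qed
    have "Q^(n-m) * gb Q n m * (-1)^(Suc m) * Q^(tri (Suc m)) * b^(Suc m) * a^(n-m)
        = (Q^(n-m) * Q^(tri (Suc m))) * (gb Q n m * (-1)^(Suc m) * b^(Suc m) * a^(n-m))"
      by (simp only: mult_ac)
    also have "\<dots> = - (b * Q^n) * t m" unfolding key t_def by (simp add: mult_ac)
    finally show "Q^(n-m) * gb Q n m * (-1)^(Suc m) * Q^(tri (Suc m)) * b^(Suc m) * a^(n-m)
        = - (b * Q^n) * t m" .
  qed
  have s3: "a * (\<Sum>m\<le>n. t m) = a^(Suc n) + (\<Sum>m\<le>n. gb Q n (Suc m) * (-1)^(Suc m) * Q^(tri (Suc m)) * b^(Suc m) * a^(n-m))"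
  proof -
    have "(\<Sum>m\<le>n. t m) = (\<Sum>m\<le>Suc n. t m)" by (simp add: t_def gb_zero)
    also have "\<dots> = t 0 + (\<Sum>m\<le>n. t (Suc m))" by (rule sum.atMost_Suc_shift)
    finally have "a * (\<Sum>m\<le>n. t m) = a * t 0 + (\<Sum>m\<le>n. a * t (Suc m))"
      by (simp add: sum_distrib_left algebra_simps)
    also have "(\<Sum>m\<le>n. a * t (Suc m)) = (\<Sum>m\<le>n. gb Q n (Suc m) * (-1)^(Suc m) * Q^(tri (Suc m)) * b^(Suc m) * a^(n-m))"
    proof (rule sum.cong[OF refl])
      fix m assume "m \<in> {..n}"
      hence mn: "m \<le> n" by simp
      show "a * t (Suc m) = gb Q n (Suc m) * (-1)^(Suc m) * Q^(tri (Suc m)) * b^(Suc m) * a^(n-m)"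
      proof (cases "m = n")
        case True thus ?thesis by (simp add: t_def gb_zero del: tri.simps)
      next
        case False
        hence "n - m = Suc (n - Suc m)" using mn by simp
        thus ?thesis by (simp add: t_def mult_ac del: tri.simps)
      qed
    qed
    finally show ?thesis by (simp add: t_def)
  qed
  have "(\<Prod>i<Suc n. a - b * Q^i) = (\<Sum>m\<le>n. t m) * (a - b * Q^n)"
    using Suc.IH by (simp add: t_def)
  also have "\<dots> = a * (\<Sum>m\<le>n. t m) + (- (b * Q^n) * (\<Sum>m\<le>n. t m))"
    by (simp add: algebra_simps)
  also have "\<dots> = (\<Sum>k\<le>Suc n. gb Q (Suc n) k * (-1)^k * Q^(tri k) * b^k * a^(Suc n-k))"
    unfolding s1 s2[symmetric] s3 by simp
  finally show ?case .
qed

lemma gb_cE: "gb (cE Q) n k = cE (gb Q n k)"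
  by (induction Q n k rule: gb.induct)
     (simp_all add: cE_1 cE_add cE_mult cE_pow eis_eq_iff)

lemma im_cE_mult: "im (cE x * y) = x * im y" by simp

lemma pow_comb: "a + b = c \<Longrightarrow> (q::'a::comm_ring_1)^a * q^b = q^c"
  by (simp flip: power_add)

lemma pair_id:
  fixes u w :: "'a::comm_ring_1"
  shows "(cE (u*w) - cE u * om^2) * (cE (u*w) - cE (u*w^2) * om^2)
       = - (cE (u^2*w*(1+w+w^2)) * om^2)"
  unfolding om2 by (simp add: eis_eq_iff algebra_simps power2_eq_square)

definition RR :: "'a::comm_ring_1 \<Rightarrow> nat \<Rightarrow> 'a" where
  "RR q L = (\<Prod>k<L. 1 + q^(2*k+1) + q^(4*k+2))"

lemma sum_odd: "(\<Sum>i<n. 2*m + 2*i + 1) = 2*m*n + n*(n::nat)"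
  by (induction n) (auto simp: algebra_simps)

lemma prod_split_half: fixes L :: nat shows "(\<Prod>i<L+L. g i) = (\<Prod>i<L. g i) * (\<Prod>i<L. g (L + i))"
proof -
  have "{..<L+L} = {..<L} \<union> {L..<L+L}" by auto
  hence "(\<Prod>i<L+L. g i) = prod g ({..<L} \<union> {L..<L+L})"
    by simp
  also have "\<dots> = (\<Prod>i<L. g i) * (\<Prod>i\<in>{L..<L+L}. g i)"
    by (rule prod.union_disjoint) auto
  also have "(\<Prod>i\<in>{L..<L+L}. g i) = (\<Prod>i<L. g (L + i))"
    using prod.shift_bounds_nat_ivl[of g 0 L L] by (simp add: atLeast0LessThan add.commute)
  finally show ?thesis .
qed

lemma prodf:
  fixes q :: "'a::comm_ring_1"
  shows "(\<Prod>i<2*L+1. cE (q^(2*L)) - cE (q^(2*i+1)) * om^2)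
     = (-1)^L * om^(2*L) * cE (q^(3*L*L) * RR q L) * (cE (q^(2*L)) - cE (q^(4*L+1)) * om^2)"
proof -
  define g where "g i = cE (q^(2*L)) - cE (q^(2*i+1)) * om^2" for i
  define x where "x i = q^(2*L+2*i+1) * (1 + q^(2*(L - Suc i)+1) + q^(4*(L - Suc i)+2))" for i
  have pair: "g i * g (L + (L - Suc i)) = - (cE (x i) * om^2)" if "i < L" for i
  proof -
    obtain d where d: "L = Suc (i + d)" using \<open>i < L\<close> by (metis less_iff_Suc_add)
    define u where "u = q^(2*i+1)"
    define w where "w = q^(2*d+1)"
    have dd: "L - Suc i = d" using d by simp
    have 1: "u * w = q^(2*L)" unfolding u_def w_def by (rule pow_comb) (simp add: d)
    have 2: "u * w^2 = q^(2*(L + (L - Suc i))+1)" unfolding u_def w_def dd power_mult[symmetric]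
      by (rule pow_comb) (simp add: d)
    have 3: "u^2 * w * (1 + w + w^2) = x i" unfolding x_def dd u_def w_def
    proof -
      have "(q ^ (2 * i + 1))\<^sup>2 * q ^ (2 * d + 1) = q^(2*L+2*i+1)"
        unfolding power_mult[symmetric] by (rule pow_comb) (simp add: d)
      moreover have "(q ^ (2 * d + 1))\<^sup>2 = q^(4*d+2)" by (simp only: power_mult[symmetric]) (simp add: algebra_simps)
      ultimately show "(q ^ (2 * i + 1))\<^sup>2 * q ^ (2 * d + 1) * (1 + q ^ (2 * d + 1) + (q ^ (2 * d + 1))\<^sup>2)
          = q ^ (2 * L + 2 * i + 1) * (1 + q ^ (2 * d + 1) + q ^ (4 * d + 2))" by simp
    qed
    have "g i * g (L + (L - Suc i)) = (cE (u*w) - cE u * om^2) * (cE (u*w) - cE (u*w^2) * om^2)"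
      by (simp only: g_def 1 2) (simp add: u_def)
    also have "\<dots> = - (cE (x i) * om^2)" unfolding pair_id 3 ..
    finally show ?thesis .
  qed
  have "(\<Prod>i<2*L+1. g i) = (\<Prod>i<L+L. g i) * g (2*L)"
    by (simp add: mult_2)
  also have "(\<Prod>i<L+L. g i) = (\<Prod>i<L. g i) * (\<Prod>i<L. g (L + (L - Suc i)))"
    unfolding prod_split_half prod.nat_diff_reindex[of "\<lambda>i. g (L + i)"] ..
  also have "\<dots> = (\<Prod>i<L. g i * g (L + (L - Suc i)))" by (rule prod.distrib[symmetric])
  also have "\<dots> = (\<Prod>i<L. (- (om^2)) * cE (x i))"
  proof (rule prod.cong[OF refl])
    fix i assume "i \<in> {..<L}"
    hence "i < L" by simp
    from pair[OF this] show "g i * g (L + (L - Suc i)) = (- (om^2)) * cE (x i)"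
      by (metis minus_mult_left mult.commute)
  qed
  also have "\<dots> = (- (om^2))^L * cE (\<Prod>i<L. x i)"
    by (simp only: prod.distrib prod_constant card_lessThan cE_prod)
  also have "(\<Prod>i<L. x i) = q^(3*L*L) * RR q L"
  proof -
    have "(\<Prod>i<L. x i) = (\<Prod>i<L. q^(2*L+2*i+1)) * (\<Prod>i<L. 1 + q^(2*(L - Suc i)+1) + q^(4*(L - Suc i)+2))"
      unfolding x_def by (rule prod.distrib)
    also have "(\<Prod>i<L. q^(2*L+2*i+1)) = q^(3*L*L)"
      unfolding power_sum[symmetric] sum_odd by (simp add: algebra_simps)
    also have "(\<Prod>i<L. 1 + q^(2*(L - Suc i)+1) + q^(4*(L - Suc i)+2)) = RR q L"
      unfolding RR_def by (rule prod.nat_diff_reindex[of "\<lambda>k. 1 + q^(2*k+1) + q^(4*k+2)"])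
    finally show ?thesis .
  qed
  finally have "(\<Prod>i<2*L+1. g i) = (- (om^2))^L * cE (q^(3*L*L) * RR q L) * g (2*L)" .
  moreover have "(- (om^2))^L = (-1)^L * (om::'a eis)^(2*L)"
  proof -
    have "(- (om^2))^L = ((-1) * (om::'a eis)^2)^L" by simp
    also have "\<dots> = (-1)^L * (om::'a eis)^(2*L)" by (simp only: power_mult_distrib power_mult)
    finally show ?thesis .
  qed
  moreover have "g (2*L) = cE (q^(2*L)) - cE (q^(4*L+1)) * om^2" unfolding g_def by simp
  ultimately show ?thesis unfolding g_def by simp
qed

lemma exp_id:
  assumes "k \<le> 2*L+1"
  shows "2 * tri k + k + 2*L*(2*L+1-k) = 3*L*L + 2*L + nat ((int L - int k)^2)"
proof -
  have "int (2 * tri k + k + 2*L*(2*L+1-k)) = int (k*k + 2*L*(2*L+1-k))" by (simp add: tri2)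
  also have "\<dots> = int (3*L*L + 2*L) + (int L - int k)^2"
  proof -
    obtain d where d: "2*L+1 = k + d" using assms le_Suc_ex by blast
    have dk: "2*L+1-k = d" using d by simp
    have di: "int d = 2 * int L + 1 - int k" using d by linarith
    have "int (k*k + 2*L*(2*L+1-k)) = int k * int k + 2 * int L * int d" unfolding dk by simp
    also have "\<dots> = int (3*L*L + 2*L) + (int L - int k)^2"
      unfolding di by (simp add: power2_eq_square algebra_simps)
    finally show ?thesis .
  qed
  also have "(int L - int k)^2 = int (nat ((int L - int k)^2))" by simp
  finally show ?thesis by linarith
qed

lemma term_id:
  fixes q :: "'a::comm_ring_1"
  assumes "k \<le> 2*L+1"
  shows "cE (gb (q^2) (2*L+1) k) * (-1)^k * cE (q^2)^(tri k) * (cE q * om^2)^k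
            * cE (q^(2*L))^(2*L+1-k) * ((-1)^L * om^L)
       = cE (q^(3*L*L+2*L) * ((-1)^(k+L) * gb (q^2) (2*L+1) k * q^nat((int L - int k)^2))) * om^(2*k+L)"
proof -
  have "cE (gb (q^2) (2*L+1) k) * (-1)^k * cE (q^2)^(tri k) * (cE q * om^2)^k
            * cE (q^(2*L))^(2*L+1-k) * ((-1)^L * om^L)
      = cE (gb (q^2) (2*L+1) k * (-1)^k * (q^2)^(tri k) * q^k * (q^(2*L))^(2*L+1-k) * (-1)^L) * om^(2*k+L)"
  proof -
    have p1: "(cE q * om^2)^k = cE (q^k) * om^(2*k)" by (simp add: power_mult_distrib power_mult cE_pow)
    have p2: "cE (q^2)^(tri k) = cE ((q^2)^(tri k))" by (simp add: cE_pow)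
    have p3: "cE (q^(2*L))^(2*L+1-k) = cE ((q^(2*L))^(2*L+1-k))" by (simp add: cE_pow)
    have p4: "(-1::'a eis)^k = cE ((-1)^k)" "(-1::'a eis)^L = cE ((-1)^L)" by (simp_all add: cE_pow cE_minus1)
    have p5: "om^(2*k+L) = om^(2*k) * (om::'a eis)^L" by (simp add: power_add)
    show ?thesis unfolding p1 p2 p3 p4 p5 by (simp only: cE_mult mult_ac)
  qed
  also have "gb (q^2) (2*L+1) k * (-1)^k * (q^2)^(tri k) * q^k * (q^(2*L))^(2*L+1-k) * (-1)^L
      = q^(3*L*L+2*L) * ((-1)^(k+L) * gb (q^2) (2*L+1) k * q^nat((int L - int k)^2))"
  proof -
    have "(q^2)^(tri k) * q^k * (q^(2*L))^(2*L+1-k) = q^(2 * tri k + k + 2*L*(2*L+1-k))"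
      by (simp add: power_add power_mult)
    also have "\<dots> = q^(3*L*L+2*L) * q^nat((int L - int k)^2)"
      unfolding exp_id[OF assms] by (simp add: power_add)
    finally have e: "(q^2)^(tri k) * q^k * (q^(2*L))^(2*L+1-k) = q^(3*L*L+2*L) * q^nat((int L - int k)^2)" .
    have "gb (q^2) (2*L+1) k * (-1)^k * (q^2)^(tri k) * q^k * (q^(2*L))^(2*L+1-k) * (-1)^L
       = ((q^2)^(tri k) * q^k * (q^(2*L))^(2*L+1-k)) * ((-1)^k * (-1)^L * gb (q^2) (2*L+1) k)"
      by (simp only: mult_ac)
    also have "\<dots> = q^(3*L*L+2*L) * ((-1)^(k+L) * gb (q^2) (2*L+1) k * q^nat((int L - int k)^2))"
      unfolding e by (simp add: power_add mult_ac)
    finally show ?thesis .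
  qed
  finally show ?thesis .
qed

lemma Legendre_0: "Legendre 0 3 = 0" by (simp add: Legendre_def cong_def)

theorem theorem2p6:
  fixes q :: "'a::field" and L :: nat
  assumes "qpoch (q^2) (q^2) (2*L+1) \<noteq> 0"
  shows "(\<Sum>j\<in>{-(int L)-1..int L}.
            (-1) ^ nat \<bar>j\<bar> * of_int (Legendre j 3)
              * qbinom (q^2) (2 * int L + 1) (int L - j) * q ^ nat (j^2))
         = q ^ (1 + 2*L) * qpoch (q^3) (q^6) L / qpoch q (q^2) L"
proof (cases "q = 0")
  case True
  have "(\<Sum>j\<in>{-(int L)-1..int L}.
            (-1) ^ nat \<bar>j\<bar> * of_int (Legendre j 3)
              * qbinom (q^2) (2 * int L + 1) (int L - j) * q ^ nat (j^2)) = 0"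
  proof (rule sum.neutral, intro ballI)
    fix j :: int
    show "(-1) ^ nat \<bar>j\<bar> * of_int (Legendre j 3) * qbinom (q^2) (2 * int L + 1) (int L - j) * q ^ nat (j^2) = 0"
    proof (cases "j = 0")
      case True thus ?thesis by (simp add: Legendre_0)
    next
      case False
      hence "nat (j^2) \<noteq> 0" by simp
      thus ?thesis using \<open>q = 0\<close> by simp
    qed
  qed
  thus ?thesis using True by simp
next
  case False
  let ?S = "(\<Sum>j\<in>{-(int L)-1..int L}.
            (-1) ^ nat \<bar>j\<bar> * of_int (Legendre j 3)
              * qbinom (q^2) (2 * int L + 1) (int L - j) * q ^ nat (j^2))"
  define G where "G k = (-1)^(k+L) * gb (q^2) (2*L+1) k * q^nat((int L - int k)^2)" for k
  have A: "?S = (\<Sum>k\<le>2*L+1. G k * leg (2*k+L))"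
  proof (rule sum.reindex_bij_witness[of _ "\<lambda>k. int L - int k" "\<lambda>j. nat (int L - j)"])
    fix j assume "j \<in> {-(int L)-1..int L}"
    thus "int L - int (nat (int L - j)) = j" "nat (int L - j) \<in> {..2*L+1}" by auto
  next
    fix k assume "k \<in> {..2*L+1}"
    thus "nat (int L - (int L - int k)) = k" "int L - int k \<in> {-(int L)-1..int L}" by auto
  next
    fix j assume j: "j \<in> {-(int L)-1..int L}"
    define k where "k = nat (int L - j)"
    have jk: "j = int L - int k" and kle: "k \<le> 2*L+1" using j by (auto simp: k_def)
    have e: "2 * int L + 1 = int (2*L+1)" "int L - j = int k" using jk by simp_all
    have "qbinom (q^2) (2 * int L + 1) (int L - j) = gb (q^2) (2*L+1) k"
      unfolding e by (rule qbinom_gb[OF assms kle])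
    thus "G (nat (int L - j)) * leg (2 * nat (int L - j) + L) =
         (-1) ^ nat \<bar>j\<bar> * of_int (Legendre j 3) * qbinom (q^2) (2 * int L + 1) (int L - j) * q ^ nat (j^2)"
      unfolding k_def[symmetric] jk G_def sign_eq leg_Legendre[OF kle] by (simp add: mult_ac)
  qed
  define X :: "'a eis" where "X = (-1)^L * om^L"
  define T where "T k = cE (gb (q^2) (2*L+1) k) * (-1)^k * cE (q^2)^(tri k) * (cE q * om^2)^k
            * cE (q^(2*L))^(2*L+1-k)" for k
  have prodeq: "(\<Sum>k\<le>2*L+1. T k) = (\<Prod>i<2*L+1. cE (q^(2*L)) - cE (q^(2*i+1)) * om^2)"
  proof -
    have "(\<Prod>i<2*L+1. cE (q^(2*L)) - cE (q^(2*i+1)) * om^2)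
        = (\<Prod>i<2*L+1. cE (q^(2*L)) - (cE q * om^2) * cE (q^2)^i)"
    proof (rule prod.cong[OF refl])
      fix i
      have qi: "q^(2*i+1) = q * (q^2)^i" by (simp add: power_mult[symmetric] power_add mult_ac)
      have "cE (q^(2*i+1)) = cE q * cE (q^2)^i" by (simp only: qi cE_mult cE_pow)
      thus "cE (q^(2*L)) - cE (q^(2*i+1)) * om^2 = cE (q^(2*L)) - (cE q * om^2) * cE (q^2)^i"
        by (simp add: mult_ac)
    qed
    also have "\<dots> = (\<Sum>k\<le>2*L+1. T k)"
      unfolding qbin_thm T_def gb_cE ..
    finally show ?thesis by simp
  qed
  have I1: "im ((\<Sum>k\<le>2*L+1. T k) * X) = (\<Sum>k\<le>2*L+1. q^(3*L*L+2*L) * (G k * leg (2*k+L)))"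
    unfolding sum_distrib_right im_sum
  proof (rule sum.cong[OF refl])
    fix k assume "k \<in> {..2*L+1}"
    hence kle: "k \<le> 2*L+1" by simp
    show "im (T k * X) = q^(3*L*L+2*L) * (G k * leg (2*k+L))"
      unfolding T_def X_def term_id[OF kle] im_cE_mult G_def leg_def by (simp add: mult_ac)
  qed
  have I2: "(\<Sum>k\<le>2*L+1. T k) * X
     = cE (q^(3*L*L) * RR q L) * (cE (q^(2*L)) - cE (q^(4*L+1)) * om^2)"
  proof -
    have "(\<Sum>k\<le>2*L+1. T k) * X = ((-1)^L * (-1)^L) * (om^(2*L) * om^L)
        * (cE (q^(3*L*L) * RR q L) * (cE (q^(2*L)) - cE (q^(4*L+1)) * om^2))"
      unfolding prodeq prodf X_def by (simp only: mult_ac)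
    also have "(-1)^L * (-1)^L = (1::'a eis)" by (simp flip: power_add add: power_mult[symmetric] mult_2[symmetric])
    also have "om^(2*L) * om^L = (1::'a eis)"
    proof -
      have "om^(2*L) * om^L = ((om::'a eis)^3)^L" by (simp flip: power_add power_mult)
      thus ?thesis by (simp add: om3)
    qed
    finally show ?thesis by simp
  qed
  have I3: "im (cE (q^(3*L*L) * RR q L) * (cE (q^(2*L)) - cE (q^(4*L+1)) * om^2))
      = q^(3*L*L+2*L) * (RR q L * q^(2*L+1))"
  proof -
    have "q^(4*L+1) = q^(2*L) * q^(2*L+1)" by (simp flip: power_add)
    hence "im (cE (q^(3*L*L) * RR q L) * (cE (q^(2*L)) - cE (q^(4*L+1)) * om^2))
        = q^(3*L*L) * RR q L * (q^(2*L) * q^(2*L+1))" by (simp add: om2)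
    thus ?thesis by (simp add: power_add mult_ac)
  qed
  have "q^(3*L*L+2*L) * (\<Sum>k\<le>2*L+1. G k * leg (2*k+L)) = im ((\<Sum>k\<le>2*L+1. T k) * X)"
    unfolding I1 sum_distrib_left ..
  also have "\<dots> = q^(3*L*L+2*L) * (RR q L * q^(2*L+1))" unfolding I2 I3 ..
  finally have "q^(3*L*L+2*L) * (\<Sum>k\<le>2*L+1. G k * leg (2*k+L)) = q^(3*L*L+2*L) * (RR q L * q^(2*L+1))" .
  hence S: "?S = RR q L * q^(2*L+1)" using False A by simp
  have nz: "qpoch q (q^2) L \<noteq> 0"
  proof -
    have "1 - q * (q^2)^k \<noteq> 0" if "k < L" for k
    proof
      assume h: "1 - q * (q^2)^k = 0"
      have "(1 - q * (q^2)^k) * (1 + q * (q^2)^k) = 1 - q^2 * (q^2)^(2*k)"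
        by (simp add: algebra_simps power2_eq_square power_mult)
      hence "1 - q^2 * (q^2)^(2*k) = 0" using h by simp
      moreover have "2*k \<in> {..<2*L+1}" using that by simp
      ultimately have "qpoch (q^2) (q^2) (2*L+1) = 0" unfolding qpoch_def
        by (metis (no_types, lifting) finite_lessThan prod_zero_iff)
      thus False using assms by simp
    qed
    thus ?thesis unfolding qpoch_def by simp
  qed
  have "qpoch (q^3) (q^6) L = qpoch q (q^2) L * RR q L"
    unfolding qpoch_def RR_def prod.distrib[symmetric]
  proof (rule prod.cong[OF refl])
    fix k
    define y where "y = q^(2*k+1)"
    have 1: "q * (q^2)^k = y" unfolding y_def by (simp add: power_mult[symmetric] mult_ac)
    have 2: "q^3 * (q^6)^k = y^3" unfolding y_def by (simp add: power_mult[symmetric] algebra_simps)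
    have 3: "q^(4*k+2) = y^2" unfolding y_def by (simp only: power_mult[symmetric]) (simp add: algebra_simps)
    show "1 - q^3 * (q^6)^k = (1 - q * (q^2)^k) * (1 + q^(2*k+1) + q^(4*k+2))"
      unfolding 1 2 3 y_def[symmetric] by (simp add: algebra_simps power2_eq_square power3_eq_cube)
  qed
  thus ?thesis unfolding S using nz by (simp add: field_simps)
qed

end
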